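(* Let $f:\mathbb{R}^n\to\mathbb{R}$ be convex and $\beta$-smooth, let $x^k\in\mathbb{R}^n$, and let $\hat f^k:\mathbb{R}^n\to\mathbb{R}$ satisfy: (a) $\hat f^k$ is convex; (b) $\hat f^k(x)\ge f(x^k)+\langle\nabla f(x^k),x-x^k\rangle$ for all $x$; (c) $\hat f^k(x)\le f(x)$ for all $x$. Then for all $x\in\mathbb{R}^n$, $$f(x)\le \hat f^k(x)+\tfrac{\beta}{2}\|x-x^k\|^2,$$ and $$\|\hat g-\nabla f(x)\|\le\beta\|x-x^k\|\quad\text{for all }\hat g\in\partial\hat f^k(x).$$
   Context: $f$ is $\beta$-smooth means differentiable with $\|\nabla f(x)-\nabla f(y)\|\le\beta\|x-y\|$ for all $x,y$. $\|\cdot\|$ is the Euclidean norm. *)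

theory Defs
  imports "HOL-Analysis.Analysis"
begin

definition subdifferential :: "('a::real_inner \<Rightarrow> real) \<Rightarrow> 'a \<Rightarrow> 'a set" where
  "subdifferential h x = {g. \<forall>y. h y \<ge> h x + inner g (y - x)}"

definition smooth_with_gradient :: "real \<Rightarrow> ('a::real_inner \<Rightarrow> real) \<Rightarrow> ('a \<Rightarrow> 'a) \<Rightarrow> bool" where
  "smooth_with_gradient beta f gradf \<longleftrightarrow>
     (\<forall>x. (f has_derivative (\<lambda>y. inner (gradf x) y)) (at x)) \<and>
     (\<forall>x y. norm (gradf x - gradf y) \<le> beta * norm (x - y))"

end

theory Submission
  imports Defs
begin

lemma descent:
  fixes f :: "'a::real_inner \<Rightarrow> real"
  assumes sm: "smooth_with_gradient beta f gradf"
  shows "f y \<le> f x + inner (gradf x) (y - x) + beta / 2 * (norm (y - x))\<^sup>2"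
proof -
  define h where "h = y - x"
  define \<phi> where "\<phi> t = f (x + t *\<^sub>R h) - t * inner (gradf x) h - beta / 2 * t\<^sup>2 * (norm h)\<^sup>2" for t :: real
  have D: "\<And>z. (f has_derivative (\<lambda>v. inner (gradf z) v)) (at z)"
    and L: "\<And>z w. norm (gradf z - gradf w) \<le> beta * norm (z - w)"
    using sm unfolding smooth_with_gradient_def by auto
  have der: "(\<phi> has_real_derivative (inner (gradf (x + t *\<^sub>R h)) h - inner (gradf x) h - beta * t * (norm h)\<^sup>2)) (at t)" for t
  proof -
    have g1: "((\<lambda>t. x + t *\<^sub>R h) has_derivative (\<lambda>s. s *\<^sub>R h)) (at t)"
      by (auto intro!: derivative_eq_intros)
    have g2: "((\<lambda>t. f (x + t *\<^sub>R h)) has_derivative (\<lambda>s. inner (gradf (x + t *\<^sub>R h)) (s *\<^sub>R h))) (at t)"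
      using has_derivative_compose[OF g1 D] by (simp add: o_def)
    have g3: "((\<lambda>t. f (x + t *\<^sub>R h)) has_real_derivative inner (gradf (x + t *\<^sub>R h)) h) (at t)"
    proof -
      have "(\<lambda>s. inner (gradf (x + t *\<^sub>R h)) (s *\<^sub>R h)) = (*) (inner (gradf (x + t *\<^sub>R h)) h)"
        by (auto simp: fun_eq_iff)
      then show ?thesis unfolding has_field_derivative_def using g2 by simp
    qed
    show ?thesis unfolding \<phi>_def
      by (rule derivative_eq_intros g3 | simp)+
  qed
  have "\<phi> 1 \<le> \<phi> 0"
  proof (rule DERIV_nonpos_imp_nonincreasing[of 0 1 \<phi>])
    fix t :: real assume t: "0 \<le> t" "t \<le> 1"
    have "inner (gradf (x + t *\<^sub>R h)) h - inner (gradf x) h = inner (gradf (x + t *\<^sub>R h) - gradf x) h"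
      by (simp add: inner_diff_left)
    also have "\<dots> \<le> norm (gradf (x + t *\<^sub>R h) - gradf x) * norm h"
      by (rule Cauchy_Schwarz_ineq2[THEN order_trans[OF abs_ge_self]])
    also have "\<dots> \<le> beta * norm (t *\<^sub>R h) * norm h"
      using L[of "x + t *\<^sub>R h" x] by (intro mult_right_mono) auto
    also have "\<dots> = beta * t * (norm h)\<^sup>2" using t by (simp add: power2_eq_square)
    finally show "\<exists>y. (\<phi> has_real_derivative y) (at t) \<and> y \<le> 0"
      using der[of t] by (intro exI[of _ "inner (gradf (x + t *\<^sub>R h)) h - inner (gradf x) h - beta * t * (norm h)\<^sup>2"]) auto
  qed simp
  then show ?thesis unfolding \<phi>_def h_def by simp
qed

theorem lemma3:
  fixes f fk :: "'n::euclidean_space \<Rightarrow> real" and gradf :: "'n \<Rightarrow> 'n"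
    and beta :: real and xk :: 'n
  assumes f_convex: "convex_on UNIV f"
    and f_smooth: "smooth_with_gradient beta f gradf"
    and a: "convex_on UNIV fk"
    and b: "\<And>x. fk x \<ge> f xk + inner (gradf xk) (x - xk)"
    and c: "\<And>x. fk x \<le> f x"
  shows "(\<forall>x. f x \<le> fk x + beta / 2 * (norm (x - xk))\<^sup>2) \<and>
         (\<forall>x. \<forall>g \<in> subdifferential fk x. norm (g - gradf x) \<le> beta * norm (x - xk))"
proof -
  have P1: "f x \<le> fk x + beta / 2 * (norm (x - xk))\<^sup>2" for x
    using descent[OF f_smooth, of x xk] b[of x] by simp
  have bpos: "beta \<ge> 0"
  proof -
    obtain e :: 'n where e: "e \<in> Basis" using nonempty_Basis by blast
    have "norm (gradf e - gradf 0) \<le> beta * norm (e - 0)"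
      using f_smooth unfolding smooth_with_gradient_def by blast
    moreover have "norm e = 1" using e by simp
    ultimately have "0 \<le> beta * 1" by (metis diff_zero norm_ge_zero order_trans)
    then show ?thesis by simp
  qed
  have P2: "norm (g - gradf x) \<le> beta * norm (x - xk)" if g: "g \<in> subdifferential fk x" for x g
  proof -
    define d where "d = g - gradf x"
    define eps where "eps = beta / 2 * (norm (x - xk))\<^sup>2"
    have key: "t * (norm d)\<^sup>2 \<le> eps + beta / 2 * t\<^sup>2 * (norm d)\<^sup>2" for t :: real
    proof -
      let ?y = "x + t *\<^sub>R d"
      have "fk ?y \<ge> fk x + inner g (?y - x)" using g unfolding subdifferential_def by blast
      moreover have "fk ?y \<le> f ?y" by (rule c)
      moreover have "f ?y \<le> f x + inner (gradf x) (?y - x) + beta / 2 * (norm (?y - x))\<^sup>2"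
        by (rule descent[OF f_smooth])
      moreover have "f x \<le> fk x + eps" unfolding eps_def by (rule P1)
      ultimately have le: "inner d (?y - x) \<le> eps + beta / 2 * (norm (?y - x))\<^sup>2"
        unfolding d_def by (simp add: inner_diff_left right_diff_distrib)
      have e1: "inner d (?y - x) = t * (norm d)\<^sup>2" by (simp add: dot_square_norm)
      have e2: "(norm (?y - x))\<^sup>2 = t\<^sup>2 * (norm d)\<^sup>2" by (simp add: power_mult_distrib)
      show ?thesis using le unfolding e1 e2 by (simp only: mult.assoc)
    qed
    show ?thesis
    proof (cases "beta = 0")
      case True
      then have "eps = 0" by (simp add: eps_def)
      with key[of 1] True have "(norm d)\<^sup>2 \<le> 0" by simp
      then show ?thesis using True by (simp add: d_def)
    next
      case False
      with bpos have bp: "beta > 0" by simp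
      have "(1/beta) * (norm d)\<^sup>2 \<le> eps + beta / 2 * (1/beta)\<^sup>2 * (norm d)\<^sup>2" by (rule key)
      then have "(norm d)\<^sup>2 \<le> 2 * beta * eps" using bp
        by (simp add: field_simps power2_eq_square)
      also have "\<dots> = (beta * norm (x - xk))\<^sup>2" by (simp add: eps_def power2_eq_square)
      finally have "(norm d)\<^sup>2 \<le> (beta * norm (x - xk))\<^sup>2" .
      then show ?thesis using bp unfolding d_def
        by (metis power2_le_imp_le mult_nonneg_nonneg norm_ge_zero less_imp_le)
    qed
  qed
  show ?thesis using P1 P2 by blast
qed

end
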